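(* Let $X$ be an infinite dimensional separable Banach space and $T:X\to X$ a continuous linear operator such that $(X,T)$ is topologically transitive. If $(X,T)$ is not transitively sensitive, then there exists a dense open subset $U_0\subset X$ such that every $x\in U_0$ has a dense orbit $\{T^nx:n\in\mathbb{Z}_+\}$.
   Context: $N_T(U,V)=\{n\in\mathbb{Z}_+:U\cap T^{-n}V\neq\varnothing\}$; $(X,T)$ is topologically transitive if $N_T(U,V)\neq\varnothing$ for all nonempty open $U,V$. $S_T(W,\delta)=\{n\in\mathbb{Z}_+:\exists x_1,x_2\in W,\ \|T^nx_1-T^nx_2\|>\delta\}$. $(X,T)$ is transitively sensitive if there is $\delta>0$ with $S_T(W,\delta)\cap N_T(U,V)\neq\varnothing$ for all nonempty open $U,V,W\subset X$. *)

theory Defs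
  imports "HOL-Analysis.Analysis"
begin

text \<open>Z_+ is read as the natural numbers including 0.\<close>

definition N_T :: "('a \<Rightarrow> 'a) \<Rightarrow> 'a set \<Rightarrow> 'a set \<Rightarrow> nat set" where
  "N_T T U V = {n. U \<inter> (T ^^ n) -` V \<noteq> {}}"

definition S_T :: "('a::real_normed_vector \<Rightarrow> 'a) \<Rightarrow> 'a set \<Rightarrow> real \<Rightarrow> nat set" where
  "S_T T W \<delta> = {n. \<exists>x1\<in>W. \<exists>x2\<in>W. norm ((T ^^ n) x1 - (T ^^ n) x2) > \<delta>}"

definition topologically_transitive :: "('a::topological_space \<Rightarrow> 'a) \<Rightarrow> bool" where
  "topologically_transitive T \<longleftrightarrow>
     (\<forall>U V. open U \<and> U \<noteq> {} \<and> open V \<and> V \<noteq> {} \<longrightarrow> N_T T U V \<noteq> {})"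

definition transitively_sensitive :: "('a::real_normed_vector \<Rightarrow> 'a) \<Rightarrow> bool" where
  "transitively_sensitive T \<longleftrightarrow>
     (\<exists>\<delta>>0. \<forall>U V W. open U \<and> U \<noteq> {} \<and> open V \<and> V \<noteq> {} \<and> open W \<and> W \<noteq> {}
        \<longrightarrow> S_T T W \<delta> \<inter> N_T T U V \<noteq> {})"

end

theory Submission
  imports Defs
begin

lemma linear_funpow: fixes T :: "'a::real_vector \<Rightarrow> 'a" shows "linear T \<Longrightarrow> linear (T ^^ n)"
proof (induction n)
  case 0 then show ?case proof -
    have "T^^0 = (\<lambda>x. x)" by auto
    thus ?thesis using linear_id by (simp add: id_def)
  qed
next
  case (Suc n) then show ?case using linear_compose[of "T^^n" T] by (metis funpow.simps(2))
qed

lemma cont_funpow: fixes T :: "'a::topological_space \<Rightarrow> 'a" shows "continuous_on UNIV T \<Longrightarrow> continuous_on UNIV (T ^^ n)"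
proof (induction n)
  case 0 then show ?case proof -
    have "T^^0 = (\<lambda>x. x)" by auto
    thus ?thesis using continuous_on_id by simp
  qed
next
  case (Suc n)
  then show ?case using continuous_on_compose[of UNIV "T^^n" T] continuous_on_subset
    by (auto simp: comp_def)
qed

lemma closed_inv_funpow:
  assumes "\<And>x. x \<in> C \<Longrightarrow> T x \<in> C" "x \<in> C"
  shows "(T ^^ m) x \<in> C"
  using assms by (induction m) auto

theorem proposition7p4:
  fixes T :: "'a::banach \<Rightarrow> 'a"
  assumes "separable_space (euclidean :: 'a topology)"
    and "\<not> (\<exists>B. finite B \<and> span B = (UNIV :: 'a set))"
    and "bounded_linear T"
    and "topologically_transitive T"
    and "\<not> transitively_sensitive T"
  shows "\<exists>U0. open U0 \<and> closure U0 = UNIV \<and>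
           (\<forall>x\<in>U0. closure {(T ^^ n) x | n. True} = UNIV)"
proof -
  have lin: "\<And>n. linear (T ^^ n)" using assms(3) bounded_linear.linear linear_funpow by blast
  have contT: "continuous_on UNIV T" using assms(3) linear_continuous_on by blast
  have contn: "\<And>n. continuous_on UNIV (T ^^ n)" using cont_funpow[OF contT] .
  have tr: "\<And>A B. open A \<Longrightarrow> A \<noteq> {} \<Longrightarrow> open B \<Longrightarrow> B \<noteq> {} \<Longrightarrow> \<exists>n x. x \<in> A \<and> (T^^n) x \<in> B"
    using assms(4) unfolding topologically_transitive_def N_T_def by blast
  obtain U V W where UVW: "open U" "U \<noteq> {}" "open V" "V \<noteq> {}" "open W" "W \<noteq> {}"
    and disj: "S_T T W 1 \<inter> N_T T U V = {}"
    using assms(5) unfolding transitively_sensitive_def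
    by (metis zero_less_one)
  obtain w where "w \<in> W" using UVW by blast
  then obtain r where r: "r > 0" "ball w r \<subseteq> W" using UVW(5) open_contains_ball by blast
  have bnd: "norm ((T^^n) d) \<le> 1" if "x \<in> U" "(T^^n) x \<in> V" "norm d < r" for n x d
  proof -
    have "n \<in> N_T T U V" using that unfolding N_T_def by blast
    hence "n \<notin> S_T T W 1" using disj by blast
    moreover have "w + d \<in> W" "w \<in> W" using r that(3) by (auto simp: dist_norm)
    ultimately have "norm ((T^^n) (w + d) - (T^^n) w) \<le> 1" unfolding S_T_def by force
    thus ?thesis using linear_add[OF lin] by simp
  qed
  have main: "closure {(T ^^ n) p | n. True} = UNIV" if hk: "(T^^k) p \<in> U" for p k
  proof -
    define C where "C = closure {(T ^^ n) p | n. True}"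
    have VC: "V \<subseteq> C"
    proof
      fix c assume c: "c \<in> V"
      show "c \<in> C" unfolding C_def closure_approachable
      proof (intro allI impI)
        fix e :: real assume e: "e > 0"
        define q where "q = (T^^k) p"
        define \<eta> where "\<eta> = r * e / 2"
        have "\<eta> > 0" using r e by (simp add: \<eta>_def)
        obtain n x where x: "x \<in> U \<inter> ball q \<eta>" "(T^^n) x \<in> V \<inter> ball c (e/2)"
        proof -
          have "q \<in> U \<inter> ball q \<eta>" using hk q_def \<open>\<eta>>0\<close> by simp
          moreover have "c \<in> V \<inter> ball c (e/2)" using c e by simp
          ultimately show ?thesis using that tr[of "U \<inter> ball q \<eta>" "V \<inter> ball c (e/2)"] UVW(1,3)
            by blast
        qed
        define d where "d = (2/e) *\<^sub>R (q - x)"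
        have "norm (q - x) < \<eta>" using x by (simp add: dist_norm)
        moreover have "norm d = (2/e) * norm (q - x)" using e by (simp add: d_def)
        ultimately have "e * norm d < e * r" using e r by (simp add: \<eta>_def field_simps)
        hence "norm d < r" using e mult_less_cancel_left_pos by blast
        hence "norm ((T^^n) d) \<le> 1" using bnd x by blast
        moreover have "(T^^n) d = (2/e) *\<^sub>R (T^^n) (q - x)"
          using linear_scale[OF lin] d_def by simp
        ultimately have "norm ((T^^n) (q - x)) \<le> e/2" using e by (simp add: field_simps)
        moreover have eqq: "(T^^n) q = (T^^n) x + (T^^n) (q - x)"
          using linear_add[OF lin, of n x "q - x"] by simp
        moreover have "dist ((T^^n) x) c < e/2" using x by (simp add: dist_commute)
        moreover have "dist ((T^^n) q) c \<le> dist ((T^^n) x) c + norm ((T^^n) (q - x))"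
          unfolding dist_norm eqq
          using norm_triangle_ineq[of "(T^^n) x - c" "(T^^n) (q - x)"]
          by (simp add: algebra_simps)
        ultimately have "dist ((T^^n) q) c < e" by linarith
        moreover have "(T^^n) q = (T^^(n+k)) p" by (simp add: q_def funpow_add)
        ultimately show "\<exists>y\<in>{(T ^^ n) p | n. True}. dist y c < e" by blast
      qed
    qed
    have inv: "T y \<in> C" if "y \<in> C" for y
    proof -
      have "T ` {(T ^^ n) p | n. True} \<subseteq> {(T ^^ n) p | n. True}"
      proof
        fix z assume "z \<in> T ` {(T ^^ n) p | n. True}"
        then obtain n where "z = T ((T^^n) p)" by blast
        hence "z = (T^^Suc n) p" by simp
        thus "z \<in> {(T ^^ n) p | n. True}" by blast
      qed
      hence "T ` C \<subseteq> C" unfolding C_def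
        using image_closure_subset[of "{(T ^^ n) p | n. True}" T "closure {(T ^^ n) p | n. True}"]
          continuous_on_subset[OF contT] closure_subset by blast
      thus ?thesis using that by blast
    qed
    show ?thesis
    proof (rule ccontr)
      assume "closure {(T ^^ n) p | n. True} \<noteq> UNIV"
      hence "- C \<noteq> {}" unfolding C_def by blast
      moreover have "open (- C)" unfolding C_def by blast
      ultimately obtain m y where "y \<in> V" "(T^^m) y \<in> - C" using tr UVW by blast
      moreover have "(T^^m) y \<in> C" using closed_inv_funpow[of C T y m] inv VC \<open>y \<in> V\<close> by blast
      ultimately show False by blast
    qed
  qed
  define U0 where "U0 = (\<Union>n. (T^^n) -` U)"
  have "open U0" unfolding U0_def
    using contn UVW(1) open_vimage by blast
  moreover have "closure U0 = UNIV"
  proof -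
    { fix x :: 'a
      have "x \<in> closure U0" unfolding closure_approachable
      proof (intro allI impI)
        fix e :: real assume "e > 0"
        then obtain n y where "y \<in> ball x e" "(T^^n) y \<in> U" using tr[of "ball x e" U] UVW by auto
        hence "y \<in> U0" "dist y x < e" unfolding U0_def by (auto simp: dist_commute)
        thus "\<exists>y\<in>U0. dist y x < e" by blast
      qed }
    thus ?thesis by blast
  qed
  moreover have "\<forall>x\<in>U0. closure {(T ^^ n) x | n. True} = UNIV"
    unfolding U0_def using main by blast
  ultimately show ?thesis by blast
qed

end
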